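(* Let $A=[\bm a_1,\dots,\bm a_n]$ be a $d\times n$ integer matrix of rank $d$ whose columns all lie on one affine hyperplane of $\mathbb{Q}^d$ not containing the origin, let $\bm w\in\mathbb{R}^n$ be a generic weight, let $\bm\beta\in\mathbb{C}^d$, and let $\bm v\in\mathbb{C}^n$ be a fake exponent of $H_A(\bm\beta)$ with respect to $\bm w$. If $I_{\bm 0}=\mathrm{nsupp}(\bm v)\subset C_{\bm w}$, then $I_{\bm 0}=K$.
   Context: $L=\ker_{\mathbb{Z}}A=\{\bm u\in\mathbb{Z}^n: A\bm u=\bm 0\}$. The toric ideal is $I_A=\langle \partial^{\bm u}-\partial^{\bm u'} : A\bm u=A\bm u',\ \bm u,\bm u'\in\mathbb{N}^n\rangle\subset\mathbb{C}[\partial_1,\dots,\partial_n]$ (multi-index notation). $H_A(\bm\beta)$ is the left ideal of the Weyl algebra $\mathbb{C}\langle x_1,\dots,x_n,\partial_1,\dots,\partial_n\rangle$ generated by $I_A$ and $\sum_j a_{ij}x_j\partial_j-\beta_i$ ($i=1,\dots,d$). A weight $\bm w$ is generic if the initial ideal $\mathrm{in}_{\bm w}I_A$ is a monomial ideal. Every $\bm u\in\mathbb{Z}^n$ is written uniquely as $\bm u=\bm u_+-\bm u_-$ with $\bm u_\pm\in\mathbb{N}^n$ of disjoint supports. For $\bm v\in\mathbb{C}^n$, $\bm u\in\mathbb{N}^n$, $[\bm v]_{\bm u}=\prod_j v_j(v_j-1)\cdots(v_j-u_j+1)$. A vector $\bm v$ is a fake exponent of $H_A(\bm\beta)$ with respect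 to $\bm w$ if $A\bm v=\bm\beta$ and $[\bm v]_{\bm u_+}=0$ for all $\bm u\in L$ with $\bm u_+\cdot\bm w>\bm u_-\cdot\bm w$. The negative support is $\mathrm{nsupp}(\bm v)=\{j: v_j\in\mathbb{Z}_{<0}\}$, and for $\bm u\in L$ one writes $I_{\bm u}=\mathrm{nsupp}(\bm v+\bm u)$. Let $\{\partial^{\bm g_+^{(i)}}-\partial^{\bm g_-^{(i)}}: i=1,\dots,m\}$ be the reduced Gröbner basis of $I_A$ with respect to $\bm w$, with $\partial^{\bm g_+^{(i)}}\in\mathrm{in}_{\bm w}I_A$, and put $\bm g^{(i)}=\bm g_+^{(i)}-\bm g_-^{(i)}$ and $C(\bm w)=\sum_{i=1}^m\mathbb{N}\bm g^{(i)}$. Define $\mathrm{NS}_{\bm w}(\bm v)$ as the set of those $I_{\bm u}$ ($\bm u\in L$) such that every $\bm u'\in L$ with $I_{\bm u'}=I_{\bm u}$ lies in $C(\bm w)$, and $K=\bigcap_{I\in\mathrm{NS}_{\bm w}(\bm v)}I$. A standard pair of a monomial ideal $M\subset\mathbb{C}[\bm\partial]$ is a pair $(\bm a,\sigma)$ with $\bm a\in\mathbb{N}^n$, $\sigma\subset\{1,\dots,n\}$ such that: (1) $a_i=0$ for $i\in\sigma$; (2) $\partial^{\bm a}\prod_{j\in\sigma}\partial_j^{b_j}\notin M$ for all $b_j\ge0$; (3) for every $l\notin\sigma$ there are $b_j\ge 0$ with $\partial^{\bm a}\partial_l^{b_l}\prod_{j\in\sigma}\partial_j^{b_j}\in M$.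 Let $\Delta_{\bm w}=\{\sigma : (\bm a,\sigma)\text{ a standard pair of }\mathrm{in}_{\bm w}I_A\}$ and $C_{\bm w}=\bigcap_{\sigma\in\Delta_{\bm w}}\sigma$. *)

theory Defs
  imports "HOL-Analysis.Analysis" "HOL-Library.Poly_Mapping"
begin

type_synonym 'n cpoly = "('n \<Rightarrow>\<^sub>0 nat) \<Rightarrow>\<^sub>0 complex"

definition mon :: "('n \<Rightarrow>\<^sub>0 nat) \<Rightarrow> 'n cpoly" where
  "mon a = Poly_Mapping.single a 1"

definition ideal_span :: "'n cpoly set \<Rightarrow> 'n cpoly set" where
  "ideal_span S = {(\<Sum>s\<in>F. r s * s) | F r. finite F \<and> F \<subseteq> S}"

text \<open>The matrix A acting on integer vectors (columns indexed by 'n, rows by 'd).\<close>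
definition Amul :: "int^'n^'d \<Rightarrow> ('n::finite \<Rightarrow> int) \<Rightarrow> ('d::finite \<Rightarrow> int)" where
  "Amul A u = (\<lambda>i. \<Sum>j\<in>UNIV. A$i$j * u j)"

definition natvec :: "('n \<Rightarrow>\<^sub>0 nat) \<Rightarrow> ('n \<Rightarrow> int)" where
  "natvec a = (\<lambda>j. int (Poly_Mapping.lookup a j))"

definition lattice :: "int^'n^'d \<Rightarrow> ('n::finite \<Rightarrow> int) set" where
  "lattice A = {u. Amul A u = (\<lambda>_. 0)}"

definition toric_ideal :: "int^'n^'d \<Rightarrow> ('n::finite) cpoly set" where
  "toric_ideal A = ideal_span {mon u - mon u' | u u'. Amul A (natvec u) = Amul A (natvec u')}"

definition wt :: "('n::finite \<Rightarrow> real) \<Rightarrow> ('n \<Rightarrow>\<^sub>0 nat) \<Rightarrow> real" where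
  "wt w a = (\<Sum>j\<in>UNIV. w j * real (Poly_Mapping.lookup a j))"

definition init_form :: "('n::finite \<Rightarrow> real) \<Rightarrow> 'n cpoly \<Rightarrow> 'n cpoly" where
  "init_form w f =
     (let m = Max (wt w ` Poly_Mapping.keys f)
      in (\<Sum>u\<in>{u\<in>Poly_Mapping.keys f. wt w u = m}. Poly_Mapping.single u (Poly_Mapping.lookup f u)))"

definition init_ideal :: "('n::finite \<Rightarrow> real) \<Rightarrow> 'n cpoly set \<Rightarrow> 'n cpoly set" where
  "init_ideal w I = ideal_span (init_form w ` I)"

definition monomial_ideal :: "'n cpoly set \<Rightarrow> bool" where
  "monomial_ideal M \<longleftrightarrow> (\<exists>S. M = ideal_span (mon ` S))"

definition generic_weight :: "int^'n^'d \<Rightarrow> ('n::finite \<Rightarrow> real) \<Rightarrow> bool" where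
  "generic_weight A w \<longleftrightarrow> monomial_ideal (init_ideal w (toric_ideal A))"

definition reduced_GB :: "('n::finite \<Rightarrow> real) \<Rightarrow> 'n cpoly set \<Rightarrow> 'n cpoly set \<Rightarrow> bool" where
  "reduced_GB w I G \<longleftrightarrow>
     finite G \<and> G \<subseteq> I \<and>
     ideal_span (init_form w ` G) = init_ideal w I \<and>
     (\<forall>g\<in>G. \<exists>a. init_form w g = mon a) \<and>
     (\<forall>g\<in>G. \<forall>g'\<in>G. g \<noteq> g' \<longrightarrow> \<not> (init_form w g' dvd init_form w g)) \<and>
     (\<forall>g\<in>G. \<forall>u\<in>Poly_Mapping.keys (g - init_form w g). mon u \<notin> init_ideal w I)"

definition pos_part :: "('n \<Rightarrow> int) \<Rightarrow> ('n \<Rightarrow> int)" where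
  "pos_part u = (\<lambda>j. max (u j) 0)"

definition neg_part :: "('n \<Rightarrow> int) \<Rightarrow> ('n \<Rightarrow> int)" where
  "neg_part u = (\<lambda>j. max (- u j) 0)"

definition dotw :: "('n::finite \<Rightarrow> int) \<Rightarrow> ('n \<Rightarrow> real) \<Rightarrow> real" where
  "dotw u w = (\<Sum>j\<in>UNIV. real_of_int (u j) * w j)"

definition ffact :: "('n::finite \<Rightarrow> complex) \<Rightarrow> ('n \<Rightarrow> int) \<Rightarrow> complex" where
  "ffact v u = (\<Prod>j\<in>UNIV. \<Prod>k<nat (u j). v j - of_nat k)"

definition fake_exponent ::
  "int^'n^'d \<Rightarrow> ('d::finite \<Rightarrow> complex) \<Rightarrow> ('n::finite \<Rightarrow> real) \<Rightarrow> ('n \<Rightarrow> complex) \<Rightarrow> bool" where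
  "fake_exponent A \<beta> w v \<longleftrightarrow>
     (\<forall>i. (\<Sum>j\<in>UNIV. of_int (A$i$j) * v j) = \<beta> i) \<and>
     (\<forall>u\<in>lattice A. dotw (pos_part u) w > dotw (neg_part u) w \<longrightarrow> ffact v (pos_part u) = 0)"

definition nsupp :: "('n \<Rightarrow> complex) \<Rightarrow> 'n set" where
  "nsupp v = {j. \<exists>k::int. k < 0 \<and> v j = of_int k}"

definition Iu :: "('n \<Rightarrow> complex) \<Rightarrow> ('n \<Rightarrow> int) \<Rightarrow> 'n set" where
  "Iu v u = nsupp (\<lambda>j. v j + of_int (u j))"

definition Ccone :: "nat \<Rightarrow> (nat \<Rightarrow> ('n \<Rightarrow>\<^sub>0 nat)) \<Rightarrow> (nat \<Rightarrow> ('n \<Rightarrow>\<^sub>0 nat)) \<Rightarrow> ('n \<Rightarrow> int) set" where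
  "Ccone m gp gm = {(\<lambda>j. \<Sum>i<m. int (c i) * (natvec (gp i) j - natvec (gm i) j)) | c. True}"

definition NS :: "int^'n^'d \<Rightarrow> ('n::finite \<Rightarrow> complex) \<Rightarrow> ('n \<Rightarrow> int) set \<Rightarrow> 'n set set" where
  "NS A v C = {Iu v u | u. u \<in> lattice A \<and> (\<forall>u'\<in>lattice A. Iu v u' = Iu v u \<longrightarrow> u' \<in> C)}"

definition Kset :: "int^'n^'d \<Rightarrow> ('n::finite \<Rightarrow> complex) \<Rightarrow> ('n \<Rightarrow> int) set \<Rightarrow> 'n set" where
  "Kset A v C = \<Inter> (NS A v C)"

definition standard_pair :: "'n cpoly set \<Rightarrow> ('n \<Rightarrow>\<^sub>0 nat) \<Rightarrow> 'n set \<Rightarrow> bool" where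
  "standard_pair M a \<sigma> \<longleftrightarrow>
     (\<forall>i\<in>\<sigma>. Poly_Mapping.lookup a i = 0) \<and>
     (\<forall>b. (\<forall>j. j \<notin> \<sigma> \<longrightarrow> Poly_Mapping.lookup b j = 0) \<longrightarrow> mon (a + b) \<notin> M) \<and>
     (\<forall>l. l \<notin> \<sigma> \<longrightarrow> (\<exists>b. (\<forall>j. j \<notin> insert l \<sigma> \<longrightarrow> Poly_Mapping.lookup b j = 0) \<and> mon (a + b) \<in> M))"

definition Delta_w :: "int^'n^'d \<Rightarrow> ('n::finite \<Rightarrow> real) \<Rightarrow> 'n set set" where
  "Delta_w A w = {\<sigma>. \<exists>a. standard_pair (init_ideal w (toric_ideal A)) a \<sigma>}"

definition C_w :: "int^'n^'d \<Rightarrow> ('n::finite \<Rightarrow> real) \<Rightarrow> 'n set" where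
  "C_w A w = \<Inter> (Delta_w A w)"

end

theory Submission
  imports Defs "HOL-Library.FuncSet"
begin


lemma lookup_mult_single_add:
  fixes r :: "('a::cancel_comm_monoid_add) \<Rightarrow>\<^sub>0 ('b::comm_semiring_1)"
  shows "Poly_Mapping.lookup (r * Poly_Mapping.single u c) (l + u) = Poly_Mapping.lookup r l * c"
proof -
  have "\<And>a. (\<Sum>aa. c when u = aa when l + u = a + aa) = (c when a = l)"
  proof -
    fix a
    have "(\<lambda>aa. c when u = aa when l + u = a + aa) = (\<lambda>aa. (c when a = l) when u = aa)"
      by (auto simp: fun_eq_iff when_def)
    then have "Sum_any (\<lambda>aa. c when u = aa when l + u = a + aa) = Sum_any (\<lambda>aa. (c when a = l) when u = aa)"
      by (rule arg_cong)
    also have "\<dots> = (c when a = l)" by (rule Sum_any_when_equal')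
    finally show "(\<Sum>aa. c when u = aa when l + u = a + aa) = (c when a = l)" .
  qed
  then show ?thesis by (simp add: lookup_mult lookup_single mult_when)
qed

lemma keys_mult_single:
  fixes r :: "('a::cancel_comm_monoid_add) \<Rightarrow>\<^sub>0 ('b::comm_semiring_1)"
  shows "Poly_Mapping.keys (r * Poly_Mapping.single u c) \<subseteq> (\<lambda>l. l + u) ` Poly_Mapping.keys r"
  using keys_mult[of r "Poly_Mapping.single u c"] by (auto split: if_splits)



lemma ideal_span_mult: "f \<in> ideal_span S \<Longrightarrow> q * f \<in> ideal_span S"
proof -
  assume "f \<in> ideal_span S"
  then obtain F r where F: "finite F" "F \<subseteq> S" and f: "f = (\<Sum>s\<in>F. r s * s)"
    unfolding ideal_span_def by blast
  have "q * f = (\<Sum>s\<in>F. (q * r s) * s)" unfolding f by (simp add: sum_distrib_left mult.assoc)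
  then show ?thesis unfolding ideal_span_def using F
    by (intro CollectI exI[of _ F] exI[of _ "\<lambda>s. q * r s"]) simp
qed

lemma ideal_span_base: "s \<in> S \<Longrightarrow> s \<in> ideal_span S"
proof -
  assume "s \<in> S"
  moreover have "s = (\<Sum>t\<in>{s}. (\<lambda>_. 1) t * t)" by simp
  ultimately show ?thesis unfolding ideal_span_def
    by (intro CollectI exI[of _ "{s}"] exI[of _ "\<lambda>_. 1"]) simp
qed

lemma keys_ideal_span_mon:
  assumes "f \<in> ideal_span (mon ` T)" "x \<in> Poly_Mapping.keys f"
  shows "\<exists>t\<in>T. \<exists>y. x = y + t"
proof -
  obtain F r where F: "finite F" "F \<subseteq> mon ` T" and f: "f = (\<Sum>s\<in>F. r s * s)"
    using assms(1) unfolding ideal_span_def by blast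
  have "x \<in> (\<Union>s\<in>F. Poly_Mapping.keys (r s * s))"
    using assms(2) keys_sum[of "\<lambda>s. r s * s" F] unfolding f by blast
  then obtain s where s: "s \<in> F" "x \<in> Poly_Mapping.keys (r s * s)" by blast
  then obtain t where t: "t \<in> T" "s = Poly_Mapping.single t 1" using F unfolding mon_def by blast
  then have "x \<in> (\<lambda>l. l + t) ` Poly_Mapping.keys (r s)"
    using s keys_mult_single[of "r s" t 1] by auto
  then show ?thesis using t by blast
qed

lemma lookup_init_form:
  "Poly_Mapping.lookup (init_form w f) x =
    (if x \<in> Poly_Mapping.keys f \<and> wt w x = Max (wt w ` Poly_Mapping.keys f) then Poly_Mapping.lookup f x else 0)"
proof -
  let ?S = "{u\<in>Poly_Mapping.keys f. wt w u = Max (wt w ` Poly_Mapping.keys f)}"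
  have "Poly_Mapping.lookup (init_form w f) x = (\<Sum>u\<in>?S. (if x = u then Poly_Mapping.lookup f u else 0))"
    unfolding init_form_def Let_def lookup_sum lookup_single when_def by (simp add: eq_commute)
  also have "\<dots> = (if x \<in> ?S then Poly_Mapping.lookup f x else 0)"
    by (simp add: sum.delta)
  finally show ?thesis by simp
qed

lemma init_form_key:
  assumes "f \<noteq> 0"
  shows "\<exists>z\<in>Poly_Mapping.keys f. Poly_Mapping.lookup (init_form w f) z \<noteq> 0"
proof -
  have ne: "wt w ` Poly_Mapping.keys f \<noteq> {}" using assms by simp
  have "Max (wt w ` Poly_Mapping.keys f) \<in> wt w ` Poly_Mapping.keys f"
    using Max_in[OF _ ne] by simp
  then obtain z where z: "z \<in> Poly_Mapping.keys f" "wt w z = Max (wt w ` Poly_Mapping.keys f)" by auto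
  then have "Poly_Mapping.lookup (init_form w f) z = Poly_Mapping.lookup f z"
    by (simp add: lookup_init_form)
  then show ?thesis using z by (intro bexI[of _ z]) (auto simp: in_keys_iff)
qed

lemma lookup_mon: "Poly_Mapping.lookup (mon a) x = (if x = a then 1 else 0)"
  by (simp add: mon_def lookup_single when_def)

lemma init_binom:
  assumes "init_form w (mon a - mon b) = mon c"
  shows "c = a \<and> a \<noteq> b \<and> wt w b < wt w a"
proof -
  let ?f = "mon a - mon b"
  have lc: "Poly_Mapping.lookup (init_form w ?f) c = 1" using assms by (simp add: lookup_mon)
  have ab: "a \<noteq> b"
  proof
    assume "a = b"
    then have "?f = 0" by simp
    then have "init_form w ?f = 0" unfolding init_form_def by simp
    then show False using lc by simp
  qed
  have keys: "Poly_Mapping.keys ?f = {a, b}"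
    using ab by (auto simp: in_keys_iff lookup_minus lookup_mon split: if_splits)
  have c1: "c \<in> Poly_Mapping.keys ?f" "wt w c = Max (wt w ` Poly_Mapping.keys ?f)" "Poly_Mapping.lookup ?f c = 1"
    using lc unfolding lookup_init_form by (auto split: if_splits)
  have ca: "c = a" using c1 ab by (auto simp: lookup_minus lookup_mon keys split: if_splits)
  have "Poly_Mapping.lookup (init_form w ?f) b = 0" using assms ab ca by (simp add: lookup_mon)
  then have "wt w b \<noteq> Max (wt w ` Poly_Mapping.keys ?f)"
    using ab by (auto simp: lookup_init_form keys lookup_minus lookup_mon)
  moreover have "wt w b \<le> Max (wt w ` Poly_Mapping.keys ?f)" by (simp add: keys)
  ultimately have "wt w b < wt w a" using c1 ca by simp
  then show ?thesis using ca ab by simp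
qed

lemma wt_add: "wt w (a + b) = wt w a + wt w b"
  by (simp add: wt_def lookup_add sum.distrib algebra_simps)



definition Sg :: "int^'n^'d \<Rightarrow> ('d::finite \<Rightarrow> int) \<Rightarrow> ('n::finite) cpoly \<Rightarrow> complex" where
  "Sg A \<beta> f = (\<Sum>x\<in>Poly_Mapping.keys f. if Amul A (natvec x) = \<beta> then Poly_Mapping.lookup f x else 0)"

lemma Sg_sup:
  assumes "finite T" "Poly_Mapping.keys f \<subseteq> T"
  shows "Sg A \<beta> f = (\<Sum>x\<in>T. if Amul A (natvec x) = \<beta> then Poly_Mapping.lookup f x else 0)"
  unfolding Sg_def using assms
  by (intro sum.mono_neutral_left) (auto simp: in_keys_iff)

lemma Sg_add: "Sg A \<beta> (f + g) = Sg A \<beta> f + Sg A \<beta> g"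
proof -
  let ?T = "Poly_Mapping.keys f \<union> Poly_Mapping.keys g"
  have "Sg A \<beta> (f + g) = (\<Sum>x\<in>?T. if Amul A (natvec x) = \<beta> then Poly_Mapping.lookup (f + g) x else 0)"
    by (rule Sg_sup) (use keys_add[of f g] in auto)
  also have "\<dots> = (\<Sum>x\<in>?T. if Amul A (natvec x) = \<beta> then Poly_Mapping.lookup f x else 0)
     + (\<Sum>x\<in>?T. if Amul A (natvec x) = \<beta> then Poly_Mapping.lookup g x else 0)"
    by (subst sum.distrib[symmetric]) (auto intro!: sum.cong simp: lookup_add)
  also have "\<dots> = Sg A \<beta> f + Sg A \<beta> g"
    by (simp add: Sg_sup[of ?T])
  finally show ?thesis .
qed

lemma Sg_uminus: "Sg A \<beta> (- f) = - Sg A \<beta> f"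
  by (simp add: Sg_def sum_negf[symmetric] cong: if_cong) (auto intro!: sum.cong)

lemma Sg_diff: "Sg A \<beta> (f - g) = Sg A \<beta> f - Sg A \<beta> g"
  using Sg_add[of A \<beta> f "- g"] Sg_uminus[of A \<beta> g] by simp

lemma Sg_sum: "finite F \<Longrightarrow> Sg A \<beta> (\<Sum>s\<in>F. h s) = (\<Sum>s\<in>F. Sg A \<beta> (h s))"
  by (induction F rule: finite_induct) (simp add: Sg_def, simp add: Sg_add)

lemma Amul_natvec_add: "Amul A (natvec (a + b)) i = Amul A (natvec a) i + Amul A (natvec b) i"
  by (simp add: Amul_def natvec_def lookup_add sum.distrib algebra_simps)

lemma Sg_mult_mon:
  "Sg A \<beta> (r * mon u) = (\<Sum>l\<in>Poly_Mapping.keys r.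
      if (\<lambda>i. Amul A (natvec l) i + Amul A (natvec u) i) = \<beta> then Poly_Mapping.lookup r l else 0)"
proof -
  let ?T = "(\<lambda>l. l + u) ` Poly_Mapping.keys r"
  have "Sg A \<beta> (r * mon u) = (\<Sum>x\<in>?T. if Amul A (natvec x) = \<beta> then Poly_Mapping.lookup (r * mon u) x else 0)"
    by (rule Sg_sup) (auto simp: mon_def intro: keys_mult_single[THEN subsetD])
  also have "\<dots> = (\<Sum>l\<in>Poly_Mapping.keys r. if Amul A (natvec (l + u)) = \<beta> then Poly_Mapping.lookup (r * mon u) (l + u) else 0)"
    by (subst sum.reindex) (auto simp: inj_on_def)
  also have "\<dots> = (\<Sum>l\<in>Poly_Mapping.keys r.
      if (\<lambda>i. Amul A (natvec l) i + Amul A (natvec u) i) = \<beta> then Poly_Mapping.lookup r l else 0)"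
    by (intro sum.cong refl) (simp add: mon_def lookup_mult_single_add Amul_natvec_add[abs_def])
  finally show ?thesis .
qed

lemma toric_Sg: "f \<in> toric_ideal A \<Longrightarrow> Sg A \<beta> f = 0"
proof -
  assume "f \<in> toric_ideal A"
  then obtain F r where F: "finite F" "F \<subseteq> {mon u - mon u' | u u'. Amul A (natvec u) = Amul A (natvec u')}"
    and f: "f = (\<Sum>s\<in>F. r s * s)"
    unfolding toric_ideal_def ideal_span_def by blast
  have "Sg A \<beta> (r s * s) = 0" if sF: "s \<in> F" for s
  proof -
    obtain u u' where s: "s = mon u - mon u'" "Amul A (natvec u) = Amul A (natvec u')"
      using F sF by blast
    have "Sg A \<beta> (r s * s) = Sg A \<beta> (r s * mon u) - Sg A \<beta> (r s * mon u')"
      by (simp add: s right_diff_distrib Sg_diff)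
    also have "\<dots> = 0" by (simp add: Sg_mult_mon s(2))
    finally show ?thesis .
  qed
  then show ?thesis unfolding f by (simp add: Sg_sum F)
qed

lemma binom_toric:
  assumes "mon a - mon b \<in> toric_ideal A" "a \<noteq> b"
  shows "Amul A (natvec a) = Amul A (natvec b)"
proof (rule ccontr)
  assume ne: "Amul A (natvec a) \<noteq> Amul A (natvec b)"
  have k: "Poly_Mapping.keys (mon a - mon b) \<subseteq> {a, b}"
    by (auto simp: in_keys_iff lookup_minus lookup_mon split: if_splits)
  have "Sg A (Amul A (natvec a)) (mon a - mon b) = 1"
    using ne assms(2) by (simp add: Sg_sup[OF _ k] lookup_minus lookup_mon)
  then show False using toric_Sg[OF assms(1)] by simp
qed



definition pm :: "('n::finite \<Rightarrow> nat) \<Rightarrow> ('n \<Rightarrow>\<^sub>0 nat)" where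
  "pm f = Abs_poly_mapping f"

lemma lookup_pm [simp]: "Poly_Mapping.lookup (pm f) = f"
  unfolding pm_def by (simp add: lookup_Abs_poly_mapping)

lemma decomp_iff:
  fixes x a :: "'n::finite \<Rightarrow>\<^sub>0 nat"
  shows "(\<exists>y. x = y + a) \<longleftrightarrow> (\<forall>j. Poly_Mapping.lookup a j \<le> Poly_Mapping.lookup x j)"
proof
  assume "\<exists>y. x = y + a" then show "\<forall>j. Poly_Mapping.lookup a j \<le> Poly_Mapping.lookup x j"
    by (auto simp: lookup_add)
next
  assume le: "\<forall>j. Poly_Mapping.lookup a j \<le> Poly_Mapping.lookup x j"
  have "x = pm (\<lambda>j. Poly_Mapping.lookup x j - Poly_Mapping.lookup a j) + a"
    by (rule poly_mapping_eqI) (use le in \<open>simp add: lookup_add\<close>)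
  then show "\<exists>y. x = y + a" by blast
qed

lemma sp_exists:
  fixes P :: "('n::finite \<Rightarrow> nat) \<Rightarrow> bool"
  assumes up: "\<And>x y. P x \<Longrightarrow> (\<forall>k. x k \<le> y k) \<Longrightarrow> P y"
    and a0: "\<not> P a0" and a1: "P (a0(j := Suc (a0 j)))"
  shows "\<exists>a \<sigma>. j \<notin> \<sigma> \<and> (\<forall>i\<in>\<sigma>. a i = 0) \<and>
     (\<forall>b. (\<forall>k. k \<notin> \<sigma> \<longrightarrow> b k = 0) \<longrightarrow> \<not> P (\<lambda>k. a k + b k)) \<and>
     (\<forall>l. l \<notin> \<sigma> \<longrightarrow> (\<exists>b. (\<forall>k. k \<notin> insert l \<sigma> \<longrightarrow> b k = 0) \<and> P (\<lambda>k. a k + b k)))"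
proof -
  define r where "r \<sigma> = (\<lambda>k. if k \<in> \<sigma> then 0 else a0 k)" for \<sigma>
  define Fam where "Fam = {\<sigma>. j \<notin> \<sigma> \<and> (\<forall>b. (\<forall>k. k \<notin> \<sigma> \<longrightarrow> b k = 0) \<longrightarrow> \<not> P (\<lambda>k. r \<sigma> k + b k))}"
  have "{} \<in> Fam"
  proof -
    have "(\<lambda>k. r {} k + b k) = a0" if "\<forall>k. k \<notin> {} \<longrightarrow> b k = 0" for b
      using that by (auto simp: r_def)
    then show ?thesis using a0 by (auto simp: Fam_def)
  qed
  moreover have "finite Fam" by simp
  ultimately obtain \<sigma> where s: "\<sigma> \<in> Fam" and mx: "\<forall>b\<in>Fam. \<sigma> \<le> b \<longrightarrow> \<sigma> = b"
    using finite_has_maximal[of Fam] by blast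
  have j: "j \<notin> \<sigma>" and s2: "\<forall>b. (\<forall>k. k \<notin> \<sigma> \<longrightarrow> b k = 0) \<longrightarrow> \<not> P (\<lambda>k. r \<sigma> k + b k)"
    using s by (auto simp: Fam_def)
  have s3: "\<exists>b. (\<forall>k. k \<notin> insert l \<sigma> \<longrightarrow> b k = 0) \<and> P (\<lambda>k. r \<sigma> k + b k)" if l: "l \<notin> \<sigma>" for l
  proof (cases "l = j")
    case True
    define b where "b = (\<lambda>k. (if k \<in> \<sigma> then a0 k else 0) + (if k = j then 1 else 0))"
    have "(\<lambda>k. r \<sigma> k + b k) = a0(j := Suc (a0 j))"
      using j by (auto simp: r_def b_def fun_eq_iff)
    then show ?thesis using a1 True by (intro exI[of _ b]) (auto simp: b_def)
  next
    case False
    have "insert l \<sigma> \<notin> Fam" using mx l by blast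
    then obtain b where b: "\<forall>k. k \<notin> insert l \<sigma> \<longrightarrow> b k = 0" "P (\<lambda>k. r (insert l \<sigma>) k + b k)"
      using False j unfolding Fam_def by auto
    have "P (\<lambda>k. r \<sigma> k + b k)"
      by (rule up[OF b(2)]) (auto simp: r_def)
    then show ?thesis using b(1) by blast
  qed
  show ?thesis
    by (intro exI[of _ "r \<sigma>"] exI[of _ \<sigma>]) (use j s2 s3 in \<open>auto simp: r_def\<close>)
qed

lemma finite_bounded_pm:
  "finite {x :: 'n::finite \<Rightarrow>\<^sub>0 nat. \<forall>j. Poly_Mapping.lookup x j \<le> B}"
proof -
  have "finite (Pi\<^sub>E UNIV (\<lambda>_::'n. {..B}))" by (intro finite_PiE) auto
  then have "finite (pm ` Pi\<^sub>E UNIV (\<lambda>_::'n. {..B}))" by simp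
  moreover have "{x :: 'n \<Rightarrow>\<^sub>0 nat. \<forall>j. Poly_Mapping.lookup x j \<le> B} \<subseteq> pm ` Pi\<^sub>E UNIV (\<lambda>_::'n. {..B})"
  proof
    fix x :: "'n \<Rightarrow>\<^sub>0 nat" assume "x \<in> {x. \<forall>j. Poly_Mapping.lookup x j \<le> B}"
    then have "Poly_Mapping.lookup x \<in> Pi\<^sub>E UNIV (\<lambda>_::'n. {..B})" by (auto simp: PiE_UNIV_domain)
    moreover have "x = pm (Poly_Mapping.lookup x)" by (rule poly_mapping_eqI) simp
    ultimately show "x \<in> pm ` Pi\<^sub>E UNIV (\<lambda>_::'n. {..B})" by blast
  qed
  ultimately show ?thesis by (rule finite_subset[rotated])
qed



theorem theorem3p1:
  fixes A :: "int^'n::finite^'d::finite"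
    and w :: "'n \<Rightarrow> real"
    and \<beta> :: "'d \<Rightarrow> complex"
    and v :: "'n \<Rightarrow> complex"
    and m :: nat
    and gp gm :: "nat \<Rightarrow> ('n \<Rightarrow>\<^sub>0 nat)"
  assumes rank: "rank (\<chi> i j. (of_int (A$i$j) :: rat)) = CARD('d)"
    and hyperplane: "\<exists>h :: 'd \<Rightarrow> rat. \<exists>c :: rat. c \<noteq> 0 \<and>
                       (\<forall>j. (\<Sum>i\<in>UNIV. h i * of_int (A$i$j)) = c)"
    and generic: "generic_weight A w"
    and GB: "reduced_GB w (toric_ideal A) ((\<lambda>i. mon (gp i) - mon (gm i)) ` {..<m})"
    and GB_lead: "\<forall>i<m. mon (gp i) \<in> init_ideal w (toric_ideal A)"
    and fake: "fake_exponent A \<beta> w v"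
    and sub: "nsupp v \<subseteq> C_w A w"
  shows "nsupp v = Kset A v (Ccone m gp gm)"
proof -
  define M where "M = init_ideal w (toric_ideal A)"
  define g where "g i = mon (gp i) - mon (gm i)" for i
  define G where "G = g ` {..<m}"
  have GB': "finite G" "G \<subseteq> toric_ideal A" "ideal_span (init_form w ` G) = M"
    "\<forall>x\<in>G. \<exists>a. init_form w x = mon a"
    "\<forall>x\<in>G. \<forall>x'\<in>G. x \<noteq> x' \<longrightarrow> \<not> init_form w x' dvd init_form w x"
    using GB unfolding reduced_GB_def M_def G_def g_def by auto
  have ini: "init_form w (g i) = mon (gp i) \<and> gp i \<noteq> gm i \<and> wt w (gm i) < wt w (gp i)" if im: "i < m" for i
  proof -
    obtain a where "init_form w (g i) = mon a" using GB'(4) im unfolding G_def by auto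
    then show ?thesis using init_binom[of w "gp i" "gm i" a] unfolding g_def by auto
  qed
  have Mspan: "M = ideal_span (mon ` gp ` {..<m})"
  proof -
    have "init_form w ` G = mon ` gp ` {..<m}" unfolding G_def using ini by force
    then show ?thesis using GB'(3) by simp
  qed
  have deg: "Amul A (natvec (gp i)) = Amul A (natvec (gm i))" if "i < m" for i
    using binom_toric[of "gp i" "gm i" A] GB'(2) ini[OF that] that unfolding G_def g_def by auto
  define nonstd where "nonstd x \<longleftrightarrow> (\<exists>i<m. \<exists>y. x = y + gp i)" for x
  have keysM: "nonstd x" if "f \<in> M" "x \<in> Poly_Mapping.keys f" for f x
    using keys_ideal_span_mon[of f "gp ` {..<m}" x] that Mspan unfolding nonstd_def by auto
  have monM: "mon x \<in> M \<longleftrightarrow> nonstd x" for x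
  proof
    assume "mon x \<in> M" then show "nonstd x" using keysM[of "mon x" x] by (simp add: mon_def)
  next
    assume "nonstd x"
    then obtain i y where i: "i < m" "x = y + gp i" unfolding nonstd_def by blast
    have "mon y * mon (gp i) \<in> M" using GB_lead i(1) ideal_span_mult unfolding M_def init_ideal_def by blast
    then show "mon x \<in> M" using i(2) by (simp add: mon_def mult_single)
  qed

  define NSf where "NSf F \<longleftrightarrow> (\<exists>i<m. \<forall>k. Poly_Mapping.lookup (gp i) k \<le> F k)" for F
  have monM': "mon x \<in> M \<longleftrightarrow> NSf (Poly_Mapping.lookup x)" for x
    using monM[of x] decomp_iff[of x] unfolding nonstd_def NSf_def by auto
  have Cw0: "Poly_Mapping.lookup (gp i) j = 0" if j: "j \<in> C_w A w" and i: "i < m" for i j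
  proof (rule ccontr)
    assume nz: "Poly_Mapping.lookup (gp i) j \<noteq> 0"
    define a0 where "a0 = (Poly_Mapping.lookup (gp i))(j := Poly_Mapping.lookup (gp i) j - 1)"
    have a1: "NSf (a0(j := Suc (a0 j)))"
    proof -
      have "a0(j := Suc (a0 j)) = Poly_Mapping.lookup (gp i)" using nz by (auto simp: a0_def fun_eq_iff)
      then show ?thesis using i unfolding NSf_def by auto
    qed
    have a0n: "\<not> NSf a0"
    proof
      assume "NSf a0"
      then obtain i' where i': "i' < m" "\<forall>k. Poly_Mapping.lookup (gp i') k \<le> a0 k" unfolding NSf_def by blast
      have le: "\<forall>k. Poly_Mapping.lookup (gp i') k \<le> Poly_Mapping.lookup (gp i) k"
      proof
        fix k
        have "a0 k \<le> Poly_Mapping.lookup (gp i) k" by (simp add: a0_def)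
        then show "Poly_Mapping.lookup (gp i') k \<le> Poly_Mapping.lookup (gp i) k" using i'(2) order_trans by blast
      qed
      have neq: "gp i' \<noteq> gp i"
      proof
        assume "gp i' = gp i"
        then have "Poly_Mapping.lookup (gp i) j \<le> a0 j" using i'(2) by metis
        then show False using nz by (simp add: a0_def)
      qed
      obtain y where y: "gp i = y + gp i'" using decomp_iff[of "gp i" "gp i'"] le by blast
      have dv: "init_form w (g i') dvd init_form w (g i)"
      proof -
        have "mon (gp i) = mon (gp i') * mon y" by (simp add: mon_def mult_single y add.commute)
        then show ?thesis using ini[OF i] ini[OF i'(1)] by (simp add: dvdI)
      qed
      have "g i \<noteq> g i'"
      proof
        assume "g i = g i'"
        then have "mon (gp i) = mon (gp i')" using ini[OF i] ini[OF i'(1)] by metis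
        then have "Poly_Mapping.lookup (mon (gp i)) (gp i) = Poly_Mapping.lookup (mon (gp i')) (gp i)" by simp
        then show False using neq by (simp add: lookup_mon)
      qed
      then show False using GB'(5) i i'(1) dv unfolding G_def by auto
    qed
    have up: "NSf y" if "NSf x" "\<forall>k. x k \<le> y k" for x y
      using that unfolding NSf_def by (meson order_trans)
    obtain a \<sigma> where sp: "j \<notin> \<sigma>" "\<forall>i\<in>\<sigma>. a i = 0"
      "\<forall>b. (\<forall>k. k \<notin> \<sigma> \<longrightarrow> b k = 0) \<longrightarrow> \<not> NSf (\<lambda>k. a k + b k)"
      "\<forall>l. l \<notin> \<sigma> \<longrightarrow> (\<exists>b. (\<forall>k. k \<notin> insert l \<sigma> \<longrightarrow> b k = 0) \<and> NSf (\<lambda>k. a k + b k))"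
      using sp_exists[of NSf a0 j] up a0n a1 by blast
    have "standard_pair M (pm a) \<sigma>"
      unfolding standard_pair_def
    proof (intro conjI allI impI ballI)
      fix i assume "i \<in> \<sigma>" then show "Poly_Mapping.lookup (pm a) i = 0" using sp(2) by simp
    next
      fix b :: "'n \<Rightarrow>\<^sub>0 nat" assume b: "\<forall>j. j \<notin> \<sigma> \<longrightarrow> Poly_Mapping.lookup b j = 0"
      have e: "Poly_Mapping.lookup (pm a + b) = (\<lambda>k. a k + Poly_Mapping.lookup b k)"
        by (rule ext) (simp add: lookup_add)
      show "mon (pm a + b) \<notin> M" using sp(3) b by (simp add: monM' e)
    next
      fix l assume "l \<notin> \<sigma>"
      then obtain b where b: "\<forall>k. k \<notin> insert l \<sigma> \<longrightarrow> b k = 0" "NSf (\<lambda>k. a k + b k)" using sp(4) by blast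
      have e: "Poly_Mapping.lookup (pm a + pm b) = (\<lambda>k. a k + b k)"
        by (rule ext) (simp add: lookup_add)
      show "\<exists>b. (\<forall>j. j \<notin> insert l \<sigma> \<longrightarrow> Poly_Mapping.lookup b j = 0) \<and> mon (pm a + b) \<in> M"
        using b by (intro exI[of _ "pm b"]) (simp add: monM' e)
    qed
    then have "\<sigma> \<in> Delta_w A w" unfolding Delta_w_def M_def by blast
    then have "j \<in> \<sigma>" using j unfolding C_w_def by blast
    then show False using sp(1) by simp
  qed
  have partA: "u \<in> Ccone m gp gm" if uL: "u \<in> lattice A" and uI: "Iu v u = nsupp v" for u
  proof -
    define P where "P = pm (\<lambda>j. nat (pos_part u j))"
    define N where "N = pm (\<lambda>j. nat (neg_part u j))"
    have nvP: "natvec P = pos_part u" by (auto simp: P_def natvec_def pos_part_def fun_eq_iff)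
    have nvN: "natvec N = neg_part u" by (auto simp: N_def natvec_def neg_part_def fun_eq_iff)
    have uPN: "u = (\<lambda>j. natvec P j - natvec N j)"
      by (auto simp: nvP nvN pos_part_def neg_part_def fun_eq_iff)
    have APN: "Amul A (natvec P) = Amul A (natvec N)"
    proof
      fix i
      have "Amul A u i = 0" using uL unfolding lattice_def by simp
      then have "(\<Sum>j\<in>UNIV. A$i$j * (natvec P j - natvec N j)) = 0"
        using uPN unfolding Amul_def by metis
      then show "Amul A (natvec P) i = Amul A (natvec N) i"
        by (simp add: Amul_def right_diff_distrib sum_subtractf)
    qed
    have Nstd: "\<not> nonstd N"
    proof
      assume "nonstd N"
      then obtain i y where i: "i < m" "N = y + gp i" unfolding nonstd_def by blast
      define d where "d = (\<lambda>j. natvec (gp i) j - natvec (gm i) j)"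
      have degp: "Amul A (natvec (gp i)) r = Amul A (natvec (gm i)) r" for r
        by (simp add: deg[OF i(1)])
      have dL: "d \<in> lattice A"
        unfolding lattice_def using degp
        by (auto simp: Amul_def d_def right_diff_distrib sum_subtractf fun_eq_iff)
      have pw: "real_of_int (pos_part d j) * w j - real_of_int (neg_part d j) * w j
           = w j * real (Poly_Mapping.lookup (gp i) j) - w j * real (Poly_Mapping.lookup (gm i) j)" for j
        by (auto simp: pos_part_def neg_part_def d_def natvec_def max_def algebra_simps)
      have "dotw (pos_part d) w - dotw (neg_part d) w = wt w (gp i) - wt w (gm i)"
        unfolding dotw_def wt_def sum_subtractf[symmetric] using pw by simp
      then have "dotw (pos_part d) w > dotw (neg_part d) w" using ini[OF i(1)] by simp
      then have "ffact v (pos_part d) = 0" using fake dL unfolding fake_exponent_def by blast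
      then obtain j k where jk: "k < nat (pos_part d j)" "v j = of_nat k"
        unfolding ffact_def by (auto simp: prod_zero_iff)
      have "pos_part d j \<le> natvec (gp i) j" by (simp add: pos_part_def d_def natvec_def)
      moreover have "natvec (gp i) j \<le> natvec N j" using i(2) by (simp add: natvec_def lookup_add)
      ultimately have kl: "int k < neg_part u j" using jk(1) nvN by auto
      then have uj: "u j = - neg_part u j" by (auto simp: neg_part_def max_def split: if_splits)
      have "j \<in> Iu v u" unfolding Iu_def nsupp_def
        using kl uj jk(2) by (intro CollectI exI[of _ "int k + u j"]) simp
      then have "j \<in> nsupp v" using uI by simp
      then obtain k' where k': "k' < 0" "v j = of_int k'" unfolding nsupp_def by blast
      then have "(of_int (int k) :: complex) = of_int k'" using jk(2) by simp
      then have "int k = k'" by (simp only: of_int_eq_iff)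
      then show False using k'(1) by simp
    qed
    obtain h :: "'d \<Rightarrow> rat" and c :: rat where hc: "c \<noteq> 0" "\<forall>j. (\<Sum>i\<in>UNIV. h i * of_int (A$i$j)) = c" using hyperplane by blast
    have key: "(\<Sum>i\<in>UNIV. h i * of_int (Amul A (natvec y) i)) = c * of_nat (\<Sum>j\<in>UNIV. Poly_Mapping.lookup y j)" for y
    proof -
      have "(\<Sum>i\<in>UNIV. h i * of_int (Amul A (natvec y) i)) = (\<Sum>i\<in>UNIV. \<Sum>j\<in>UNIV. h i * of_int (A$i$j) * of_nat (Poly_Mapping.lookup y j))"
        by (simp add: Amul_def natvec_def sum_distrib_left mult.assoc)
      also have "\<dots> = (\<Sum>j\<in>UNIV. (\<Sum>i\<in>UNIV. h i * of_int (A$i$j)) * of_nat (Poly_Mapping.lookup y j))"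
        by (subst sum.swap) (simp add: sum_distrib_right)
      also have "\<dots> = c * of_nat (\<Sum>j\<in>UNIV. Poly_Mapping.lookup y j)" using hc(2) by (simp add: sum_distrib_left of_nat_sum)
      finally show ?thesis .
    qed
    have tot: "(\<Sum>j\<in>UNIV. Poly_Mapping.lookup x j) = (\<Sum>j\<in>UNIV. Poly_Mapping.lookup z j)"
      if "Amul A (natvec x) = Amul A (natvec z)" for x z
    proof -
      have "c * of_nat (\<Sum>j\<in>UNIV. Poly_Mapping.lookup x j) = c * of_nat (\<Sum>j\<in>UNIV. Poly_Mapping.lookup z j)"
        by (simp only: key[symmetric] that)
      then have "(of_nat (\<Sum>j\<in>UNIV. Poly_Mapping.lookup x j) :: rat) = of_nat (\<Sum>j\<in>UNIV. Poly_Mapping.lookup z j)"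
        using hc(1) by (metis mult_left_cancel)
      then show ?thesis by (simp only: of_nat_eq_iff)
    qed
    define S where "S = {x. Amul A (natvec x) = Amul A (natvec P) \<and> (\<lambda>j. natvec P j - natvec x j) \<in> Ccone m gp gm}"
    have finS: "finite S"
    proof -
      have "S \<subseteq> {x. \<forall>j. Poly_Mapping.lookup x j \<le> (\<Sum>k\<in>UNIV. Poly_Mapping.lookup P k)}"
      proof
        fix x assume "x \<in> S"
        then have "(\<Sum>k\<in>UNIV. Poly_Mapping.lookup x k) = (\<Sum>k\<in>UNIV. Poly_Mapping.lookup P k)" using tot unfolding S_def by blast
        moreover have "Poly_Mapping.lookup x j \<le> (\<Sum>k\<in>UNIV. Poly_Mapping.lookup x k)" for j by (rule member_le_sum) auto
        ultimately show "x \<in> {x. \<forall>j. Poly_Mapping.lookup x j \<le> (\<Sum>k\<in>UNIV. Poly_Mapping.lookup P k)}" by simp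
      qed
      then show ?thesis using finite_bounded_pm finite_subset by blast
    qed
    have PS: "P \<in> S" unfolding S_def Ccone_def by (auto intro!: exI[of _ "\<lambda>_. 0"])
    define x where "x = arg_min_on (wt w) S"
    have xS: "x \<in> S" and xmin: "\<not>(\<exists>y\<in>S. wt w y < wt w x)"
      using arg_min_if_finite[OF finS, of "wt w"] PS unfolding x_def by auto
    have xstd: "\<not> nonstd x"
    proof
      assume "nonstd x"
      then obtain i y where i: "i < m" "x = y + gp i" unfolding nonstd_def by blast
      define x' where "x' = y + gm i"
      have degp: "Amul A (natvec (gp i)) r = Amul A (natvec (gm i)) r" for r
        by (simp add: deg[OF i(1)])
      have "x' \<in> S"
      proof -
        have A1: "Amul A (natvec x') = Amul A (natvec x)"
          using degp by (auto simp: fun_eq_iff x'_def i(2) Amul_natvec_add)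
        obtain cc where cc: "(\<lambda>j. natvec P j - natvec x j) = (\<lambda>j. \<Sum>i<m. int (cc i) * (natvec (gp i) j - natvec (gm i) j))"
          using xS unfolding S_def Ccone_def by blast
        have "(\<lambda>j. natvec P j - natvec x' j) = (\<lambda>j. \<Sum>i'<m. int ((cc(i := Suc (cc i))) i') * (natvec (gp i') j - natvec (gm i') j))"
        proof
          fix j
          have "(\<Sum>i'<m. int ((cc(i := Suc (cc i))) i') * (natvec (gp i') j - natvec (gm i') j))
             = (\<Sum>i'<m. int (cc i') * (natvec (gp i') j - natvec (gm i') j) + (if i' = i then natvec (gp i') j - natvec (gm i') j else 0))"
            by (intro sum.cong) (auto simp: algebra_simps)
          also have "\<dots> = (\<Sum>i'<m. int (cc i') * (natvec (gp i') j - natvec (gm i') j)) + (natvec (gp i) j - natvec (gm i) j)"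
            using i(1) by (simp add: sum.distrib)
          also have "\<dots> = natvec P j - natvec x j + (natvec (gp i) j - natvec (gm i) j)"
            using fun_cong[OF cc, of j] by simp
          also have "\<dots> = natvec P j - natvec x' j" by (simp add: x'_def i(2) natvec_def lookup_add)
          finally show "natvec P j - natvec x' j = (\<Sum>i'<m. int ((cc(i := Suc (cc i))) i') * (natvec (gp i') j - natvec (gm i') j))"
            by simp
        qed
        then show ?thesis using xS A1 unfolding S_def Ccone_def by auto
      qed
      moreover have "wt w x' < wt w x" using ini[OF i(1)] by (simp add: x'_def i(2) wt_add)
      ultimately show False using xmin by blast
    qed
    have xN: "x = N"
    proof (rule ccontr)
      assume ne: "x \<noteq> N"
      define f where "f = mon x - mon N"
      have "Poly_Mapping.lookup f x = 1" using ne by (simp add: f_def lookup_minus lookup_mon)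
      then have f0: "f \<noteq> 0" by auto
      have "f \<in> toric_ideal A" unfolding toric_ideal_def f_def using xS APN
        by (intro ideal_span_base) (auto simp: S_def)
      then have fM: "init_form w f \<in> M" unfolding M_def init_ideal_def by (intro ideal_span_base) blast
      obtain z where z: "z \<in> Poly_Mapping.keys f" "Poly_Mapping.lookup (init_form w f) z \<noteq> 0"
        using init_form_key[OF f0] by blast
      have "nonstd z" using keysM[OF fM] z(2) by (simp add: in_keys_iff)
      moreover have "z = x \<or> z = N" using z(1)
        by (auto simp: f_def in_keys_iff lookup_minus lookup_mon split: if_splits)
      ultimately show False using xstd Nstd by blast
    qed
    have "(\<lambda>j. natvec P j - natvec x j) \<in> Ccone m gp gm" using xS unfolding S_def by blast
    then show ?thesis using uPN xN by simp
  qed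
  have NSsub: "nsupp v \<subseteq> I" if I: "I \<in> NS A v (Ccone m gp gm)" for I
  proof
    fix j assume j: "j \<in> nsupp v"
    obtain u where u: "I = Iu v u" "u \<in> lattice A" "\<forall>u'\<in>lattice A. Iu v u' = Iu v u \<longrightarrow> u' \<in> Ccone m gp gm"
      using I unfolding NS_def by blast
    then have "u \<in> Ccone m gp gm" by blast
    then obtain cc where cc: "u = (\<lambda>j. \<Sum>i<m. int (cc i) * (natvec (gp i) j - natvec (gm i) j))"
      unfolding Ccone_def by blast
    have "j \<in> C_w A w" using j sub by blast
    then have "u j \<le> 0" unfolding cc using Cw0
      by (auto simp: natvec_def intro!: sum_nonpos mult_nonneg_nonpos)
    obtain k where k: "k < 0" "v j = of_int k" using j unfolding nsupp_def by blast
    show "j \<in> I" unfolding u(1) Iu_def nsupp_def using k \<open>u j \<le> 0\<close>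
      by (intro CollectI exI[of _ "k + u j"]) simp
  qed
  have NSin: "nsupp v \<in> NS A v (Ccone m gp gm)"
    unfolding NS_def
    by (intro CollectI exI[of _ "\<lambda>_. 0"]) (use partA in \<open>auto simp: lattice_def Amul_def Iu_def\<close>)
  show ?thesis unfolding Kset_def using NSsub NSin by blast
qed

end
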